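(* Let $l\in\mathbb N$, $V_{l+1}=\{v_1,\dots,v_{l+1}\}$ and $B\subset V_{l+1}$ with $b:=\#B$. The number of balanced trees $T\in\mathcal T_{V_{l+1}}$ with $B(T)=B$ is $0$ if $b\in\{0,l+1\}$, and otherwise $$\#\{T\in\mathcal T_{V_{l+1}}\mid B(T)=B\}=l!\binom{l-1}{b-1}.$$
   Context: For a finite vertex set $V$ and $N\ge1$, a route through $V$ of length $N$ is a sequence $\mathbf i=(i_1,\dots,i_N)\in V^N$ whose set of entries equals $V$; its circuit multigraph $G_{\mathbf i}$ has vertex set $V$ and edges $1,\dots,N$, edge $k<N$ from $i_k$ to $i_{k+1}$, edge $N$ from $i_N$ to $i_1$; $\mathcal C_{V,N}$ is the set of these, each identified with its route. A directed multigraph is balanced if its edges split into pairs $(e,e')$ with the head of $e$ the tail of $e'$ and vice versa. $\mathcal T_{V_{l+1}}$ is the set of balanced $G\in\mathcal C_{V_{l+1},2l}$. The black vertices are $B(G_{\mathbf i})=\{i_t:t\text{ odd}\}$. *)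

theory Defs
  imports Main
begin

text \<open>A route of length N through V is a list i of length N (positions 0..N-1 correspond
to the paper's 1..N) whose set of entries is V.  The circuit multigraph G_i is identified
with its route: edge k (0 \<le> k < N) goes from i!k to i!((k+1) mod N).\<close>

definition circuits :: "'a set \<Rightarrow> nat \<Rightarrow> 'a list set" where
  "circuits V N = {i. N \<ge> 1 \<and> length i = N \<and> set i = V}"

definition edge_tail :: "'a list \<Rightarrow> nat \<Rightarrow> 'a" where
  "edge_tail i k = i ! k"

definition edge_head :: "'a list \<Rightarrow> nat \<Rightarrow> 'a" where
  "edge_head i k = i ! ((k + 1) mod length i)"

text \<open>Balanced: the edges split into pairs (e,e') (a fixed-point-free involution on the
edge set) with head e = tail e' and tail e = head e'.\<close>

definition balanced :: "'a list \<Rightarrow> bool" where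
  "balanced i \<longleftrightarrow> (\<exists>\<sigma> :: nat \<Rightarrow> nat. \<forall>e < length i.
      \<sigma> e < length i \<and> \<sigma> e \<noteq> e \<and> \<sigma> (\<sigma> e) = e \<and>
      edge_head i e = edge_tail i (\<sigma> e) \<and> edge_tail i e = edge_head i (\<sigma> e))"

definition balanced_trees :: "'a set \<Rightarrow> nat \<Rightarrow> 'a list set" where
  "balanced_trees V l = {i \<in> circuits V (2 * l). balanced i}"

text \<open>Black vertices: entries at odd 1-based positions, i.e. even 0-based positions.\<close>

definition black :: "'a list \<Rightarrow> 'a set" where
  "black i = {i ! t | t. t < length i \<and> even t}"

end

theory Submission
  imports Defs
begin


definition balL :: "'a list \<Rightarrow> bool" where
  "balL L \<longleftrightarrow> (\<exists>\<sigma> :: nat \<Rightarrow> nat. \<forall>e < length L - 1.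
      \<sigma> e < length L - 1 \<and> \<sigma> e \<noteq> e \<and> \<sigma> (\<sigma> e) = e \<and>
      L ! (Suc e) = L ! (\<sigma> e) \<and> L ! e = L ! (Suc (\<sigma> e)))"

definition rem :: "'a list \<Rightarrow> nat \<Rightarrow> 'a list" where
  "rem L k = take k L @ drop (k+2) L"

lemma rem_length: "k + 2 \<le> length L \<Longrightarrow> length (rem L k) = length L - 2"
  by (simp add: rem_def)

lemma rem_nth: "k + 2 \<le> length L \<Longrightarrow> i < length L - 2 \<Longrightarrow>
   rem L k ! i = L ! (if i < k then i else i + 2)"
  by (auto simp: rem_def nth_append min_def)

lemma edge_map:
  assumes "0 < k" "k + 2 \<le> length L" "L ! (k - 1) = L ! (k + 1)" "e < length L - 3"
  shows "rem L k ! e = L ! (if e < k - 1 then e else e + 2) \<and>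
         rem L k ! (Suc e) = L ! (Suc (if e < k - 1 then e else e + 2))"
  using assms by (cases "e = k - 1") (auto simp: rem_nth)

lemma lift_bal:
  assumes k: "0 < k" "k + 2 \<le> length L" and eq: "L ! (k - 1) = L ! (k + 1)"
    and b: "balL (rem L k)"
  shows "balL L"
proof -
  obtain \<sigma>' where s': "\<forall>e < length (rem L k) - 1.
      \<sigma>' e < length (rem L k) - 1 \<and> \<sigma>' e \<noteq> e \<and> \<sigma>' (\<sigma>' e) = e \<and>
      rem L k ! (Suc e) = rem L k ! (\<sigma>' e) \<and> rem L k ! e = rem L k ! (Suc (\<sigma>' e))"
    using b unfolding balL_def by blast
  have len: "length (rem L k) - 1 = length L - 3" using k by (simp add: rem_length)
  define \<phi> where "\<phi> e = (if e < k - 1 then e else e + 2)" for e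
  define \<psi> where "\<psi> e = (if e < k - 1 then e else e - 2)" for e
  define \<sigma> where "\<sigma> e = (if e = k - 1 then k else if e = k then k - 1 else \<phi> (\<sigma>' (\<psi> e)))" for e
  have em: "rem L k ! e = L ! (\<phi> e) \<and> rem L k ! (Suc e) = L ! (Suc (\<phi> e))"
    if "e < length L - 3" for e using edge_map[OF k eq that] by (simp add: \<phi>_def)
  show ?thesis unfolding balL_def
  proof (intro exI allI impI)
    fix e assume e: "e < length L - 1"
    show "\<sigma> e < length L - 1 \<and> \<sigma> e \<noteq> e \<and> \<sigma> (\<sigma> e) = e \<and> L ! Suc e = L ! \<sigma> e \<and> L ! e = L ! Suc (\<sigma> e)"
    proof (cases "e = k - 1 \<or> e = k")
      case True
      then show ?thesis using k eq by (auto simp: \<sigma>_def)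
    next
      case False
      let ?e = "\<psi> e"
      have pe: "?e < length L - 3" "\<phi> ?e = e" using False e k by (auto simp: \<psi>_def \<phi>_def)
      have s1: "\<sigma>' ?e < length L - 3" "\<sigma>' ?e \<noteq> ?e" "\<sigma>' (\<sigma>' ?e) = ?e"
        "rem L k ! (Suc ?e) = rem L k ! (\<sigma>' ?e)" "rem L k ! ?e = rem L k ! (Suc (\<sigma>' ?e))"
        using s'[rule_format, of ?e] pe(1) len by simp_all
      have se: "\<sigma> e = \<phi> (\<sigma>' ?e)" using False by (simp add: \<sigma>_def)
      have ph: "\<phi> (\<sigma>' ?e) \<noteq> k - 1" "\<phi> (\<sigma>' ?e) \<noteq> k" "\<psi> (\<phi> (\<sigma>' ?e)) = \<sigma>' ?e"
        "\<phi> (\<sigma>' ?e) < length L - 1"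
        using s1(1) k by (auto simp: \<phi>_def \<psi>_def)
      have inj: "\<phi> a = \<phi> b \<Longrightarrow> a = b" for a b by (auto simp: \<phi>_def split: if_splits)
      have "\<sigma> (\<sigma> e) = e" using ph s1 pe by (simp add: se \<sigma>_def)
      moreover have "\<sigma> e \<noteq> e" using se s1(2) pe(2) inj by metis
      moreover have "L ! Suc e = L ! \<sigma> e" using em[OF pe(1)] em[OF s1(1)] s1(4) pe(2) se by metis
      moreover have "L ! e = L ! Suc (\<sigma> e)" using em[OF pe(1)] em[OF s1(1)] s1(5) pe(2) se by metis
      ultimately show ?thesis using ph(4) se by simp
    qed
  qed
qed

lemma restrict_bal:
  assumes k: "0 < k" "k + 2 \<le> length L"
    and s: "\<forall>e < length L - 1.
      \<sigma> e < length L - 1 \<and> \<sigma> e \<noteq> e \<and> \<sigma> (\<sigma> e) = e \<and>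
      L ! (Suc e) = L ! (\<sigma> e) \<and> L ! e = L ! (Suc (\<sigma> e))"
    and sk: "\<sigma> (k - 1) = k"
  shows "balL (rem L k)" and "L ! (k - 1) = L ! (k + 1)"
proof -
  have k1: "k - 1 < length L - 1" using k by simp
  show eq: "L ! (k - 1) = L ! (k + 1)" using s[rule_format, OF k1] sk k by simp
  have sk2: "\<sigma> k = k - 1" using s[rule_format, OF k1] sk by simp
  have len: "length (rem L k) - 1 = length L - 3" using k by (simp add: rem_length)
  define \<phi> where "\<phi> e = (if e < k - 1 then e else e + 2)" for e
  define \<psi> where "\<psi> e = (if e < k - 1 then e else e - 2)" for e
  have em: "rem L k ! e = L ! (\<phi> e) \<and> rem L k ! (Suc e) = L ! (Suc (\<phi> e))"
    if "e < length L - 3" for e using edge_map[OF k eq that] by (simp add: \<phi>_def)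
  have inj: "\<phi> a = \<phi> b \<Longrightarrow> a = b" for a b by (auto simp: \<phi>_def split: if_splits)
  show "balL (rem L k)" unfolding balL_def len
  proof (intro exI[of _ "\<lambda>e. \<psi> (\<sigma> (\<phi> e))"] allI impI)
    fix e assume e: "e < length L - 3"
    have pe: "\<phi> e < length L - 1" "\<phi> e \<noteq> k - 1" "\<phi> e \<noteq> k" using e k by (auto simp: \<phi>_def)
    have s1: "\<sigma> (\<phi> e) < length L - 1" "\<sigma> (\<phi> e) \<noteq> \<phi> e" "\<sigma> (\<sigma> (\<phi> e)) = \<phi> e"
        "L ! (Suc (\<phi> e)) = L ! (\<sigma> (\<phi> e))" "L ! (\<phi> e) = L ! (Suc (\<sigma> (\<phi> e)))"
      using s[rule_format, OF pe(1)] by simp_all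
    have ne: "\<sigma> (\<phi> e) \<noteq> k - 1" "\<sigma> (\<phi> e) \<noteq> k"
      using s1(3) sk sk2 pe by metis+
    have ps: "\<phi> (\<psi> (\<sigma> (\<phi> e))) = \<sigma> (\<phi> e)" "\<psi> (\<sigma> (\<phi> e)) < length L - 3"
      using ne s1(1) k by (auto simp: \<phi>_def \<psi>_def)
    have pp: "\<psi> (\<phi> x) = x" for x by (simp add: \<phi>_def \<psi>_def)
    show "\<psi> (\<sigma> (\<phi> e)) < length L - 3 \<and> \<psi> (\<sigma> (\<phi> e)) \<noteq> e \<and>
          \<psi> (\<sigma> (\<phi> (\<psi> (\<sigma> (\<phi> e))))) = e \<and>
          rem L k ! Suc e = rem L k ! \<psi> (\<sigma> (\<phi> e)) \<and> rem L k ! e = rem L k ! Suc (\<psi> (\<sigma> (\<phi> e)))"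
      using ps s1 em[OF e] em[OF ps(2)] pp by metis
  qed
qed

lemma count_two:
  "i < j \<Longrightarrow> j < length xs \<Longrightarrow> xs ! i = x \<Longrightarrow> xs ! j = x \<Longrightarrow> count_list xs x \<ge> 2"
proof (induction xs arbitrary: i j)
  case Nil then show ?case by simp
next
  case (Cons a xs)
  show ?case
  proof (cases i)
    case 0
    then obtain j' where "j = Suc j'" using Cons by (cases j) auto
    then have "x \<in> set xs" using Cons by (auto simp: in_set_conv_nth)
    then have "count_list xs x \<ge> 1" using count_list_0_iff by (metis less_one not_le)
    then show ?thesis using Cons 0 by simp
  next
    case (Suc i')
    then obtain j' where "j = Suc j'" using Cons by (cases j) auto
    then have "count_list xs x \<ge> 2" using Cons Suc by auto
    then show ?thesis by simp
  qed
qed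

lemma count_one_unique:
  "count_list xs x = 1 \<Longrightarrow> i < length xs \<Longrightarrow> j < length xs \<Longrightarrow> xs ! i = x \<Longrightarrow> xs ! j = x \<Longrightarrow> i = j"
proof (rule ccontr)
  assume a: "count_list xs x = 1" "i < length xs" "j < length xs" "xs ! i = x" "xs ! j = x" "i \<noteq> j"
  then have "count_list xs x \<ge> 2" using count_two[of i j xs x] count_two[of j i xs x]
    by (metis linorder_neqE_nat)
  then show False using a by simp
qed



definition good :: "'a list \<Rightarrow> bool" where
  "good L \<longleftrightarrow> L \<noteq> [] \<and> hd L = last L \<and> length L + 1 = 2 * card (set L) \<and> balL L"

definition blackL :: "'a list \<Rightarrow> 'a set" where
  "blackL L = {L ! t | t. t < length L \<and> even t}"

definition ins :: "'a list \<Rightarrow> nat \<Rightarrow> 'a \<Rightarrow> 'a list" where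
  "ins L j y = take (Suc j) L @ [y, L ! j] @ drop (Suc j) L"

lemma ins_length[simp]: "j < length L \<Longrightarrow> length (ins L j y) = length L + 2"
  by (simp add: ins_def)

lemma ins_nth: "j < length L \<Longrightarrow> i < length L + 2 \<Longrightarrow>
  ins L j y ! i = (if i \<le> j then L ! i else if i = Suc j then y else if i = Suc (Suc j) then L ! j else L ! (i - 2))"
proof -
  have h: "\<not> i \<le> j \<Longrightarrow> i \<noteq> Suc j \<Longrightarrow> i \<noteq> Suc (Suc j) \<Longrightarrow> Suc (i-3) = i - 2" by arith
  assume "j < length L" "i < length L + 2"
  then show ?thesis by (auto simp: ins_def nth_append min_def nth_Cons' h split: if_splits)
qed

lemma rem_ins: "j < length L \<Longrightarrow> rem (ins L j y) (Suc j) = L"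
  by (simp add: ins_def rem_def)

lemma ins_rem: assumes "0 < k" "k + 2 \<le> length L" "L ! (k - 1) = L ! (k + 1)"
  shows "ins (rem L k) (k - 1) (L ! k) = L"
proof (rule nth_equalityI)
  have l: "k - 1 < length (rem L k)" using assms by (simp add: rem_length)
  show "length (ins (rem L k) (k - 1) (L ! k)) = length L" using assms l by (simp add: rem_length)
  fix i assume "i < length (ins (rem L k) (k - 1) (L ! k))"
  then have i: "i < length L" using assms l by (simp add: rem_length)
  show "ins (rem L k) (k - 1) (L ! k) ! i = L ! i"
  proof -
    have h: "\<not> i < k \<Longrightarrow> i \<noteq> k \<Longrightarrow> i \<noteq> Suc k \<Longrightarrow> Suc (Suc (i - 2)) = i" by arith
    show ?thesis using assms i l by (auto simp: ins_nth rem_nth rem_length h)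
  qed
qed

lemma set_take_drop: "set L = set (take n L) \<union> set (drop n L)"
  by (metis append_take_drop_id set_append)

lemma count_take_drop: "count_list L v = count_list (take n L) v + count_list (drop n L) v"
  by (metis append_take_drop_id count_list_append)

lemma set_ins: "j < length L \<Longrightarrow> set (ins L j y) = insert y (set L)"
proof -
  assume j: "j < length L"
  have "L ! j \<in> set L" using j by simp
  then show ?thesis using set_take_drop[of L "Suc j"] by (auto simp: ins_def)
qed

lemma count_ins: "j < length L \<Longrightarrow> count_list (ins L j y) v =
   count_list L v + (if v = y then 1 else 0) + (if v = L ! j then 1 else 0)"
  using count_take_drop[of L v "Suc j"] by (simp add: ins_def)

lemma good_single: "good [r]"
  by (simp add: good_def balL_def)

lemma good_ins:
  assumes g: "good L" and y: "y \<notin> set L" and j: "j < length L"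
  shows "good (ins L j y)"
proof -
  have b: "balL (ins L j y)"
    by (rule lift_bal[of "Suc j"]) (use j g in \<open>simp_all add: ins_nth rem_ins good_def\<close>)
  have ne: "L \<noteq> []" using g by (simp add: good_def)
  have hd: "hd (ins L j y) = hd L" using ne by (simp add: ins_def hd_append)
  have last: "last (ins L j y) = last L"
  proof (cases "Suc j < length L")
    case True then show ?thesis by (simp add: ins_def last_append)
  next
    case False then have "j = length L - 1" using j by simp
    then show ?thesis using ne by (simp add: ins_def last_conv_nth nth_append)
  qed
  have c: "card (set (ins L j y)) = Suc (card (set L))" using set_ins[OF j] y by simp
  have "ins L j y \<noteq> []" by (simp add: ins_def)
  then show ?thesis using g b hd last c j by (simp add: good_def)
qed

lemma blackL_iff: "x \<in> blackL L \<longleftrightarrow> (\<exists>t<length L. even t \<and> L ! t = x)"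
  by (auto simp: blackL_def)

lemma ins_black_ex: assumes j: "j < length L"
  shows "(\<exists>t<length L + 2. even t \<and> ins L j y ! t = x) \<longleftrightarrow> (\<exists>t<length L. even t \<and> L ! t = x) \<or> (odd j \<and> x = y)"
proof
  assume "\<exists>t<length L + 2. even t \<and> ins L j y ! t = x"
  then obtain t where t: "t < length L + 2" "even t" "ins L j y ! t = x" by blast
  consider "t \<le> j" | "t = Suc j" | "t = Suc (Suc j)" | "t > Suc (Suc j)" by linarith
  then show "(\<exists>t<length L. even t \<and> L ! t = x) \<or> (odd j \<and> x = y)"
  proof cases
    case 1 then have "L ! t = x" "t < length L" using t j by (auto simp: ins_nth)
    then show ?thesis using t by blast
  next
    case 2 then show ?thesis using t j by (auto simp: ins_nth)
  next
    case 3 then have "even j" "L ! j = x" using t j by (auto simp: ins_nth)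
    then show ?thesis using j by blast
  next
    case 4 then have "even (t - 2)" "L ! (t - 2) = x" "t - 2 < length L" using t j by (auto simp: ins_nth)
    then show ?thesis by blast
  qed
next
  assume "(\<exists>t<length L. even t \<and> L ! t = x) \<or> (odd j \<and> x = y)"
  then show "\<exists>t<length L + 2. even t \<and> ins L j y ! t = x"
  proof
    assume "\<exists>t<length L. even t \<and> L ! t = x"
    then obtain t where t: "t < length L" "even t" "L ! t = x" by blast
    show ?thesis
    proof (cases "t \<le> j")
      case True then show ?thesis using t j by (intro exI[of _ t]) (auto simp: ins_nth)
    next
      case False then show ?thesis using t j by (intro exI[of _ "t + 2"]) (auto simp: ins_nth)
    qed
  next
    assume "odd j \<and> x = y"
    then show ?thesis using j by (intro exI[of _ "Suc j"]) (auto simp: ins_nth)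
  qed
qed

lemma blackL_ins: assumes j: "j < length L"
  shows "blackL (ins L j y) = (if even j then blackL L else insert y (blackL L))"
  using ins_black_ex[OF j, of y] j by (auto simp: blackL_iff)



lemma good_rem:
  assumes g: "good L" and k: "0 < k" "k + 2 \<le> length L" and c: "count_list L (L ! k) = 1"
  shows "L ! (k - 1) = L ! (k + 1)" "good (rem L k)" "set (rem L k) = set L - {L ! k}"
proof -
  obtain \<sigma> where s: "\<forall>e < length L - 1.
      \<sigma> e < length L - 1 \<and> \<sigma> e \<noteq> e \<and> \<sigma> (\<sigma> e) = e \<and>
      L ! (Suc e) = L ! (\<sigma> e) \<and> L ! e = L ! (Suc (\<sigma> e))"
    using g unfolding good_def balL_def by blast
  have k1: "k - 1 < length L - 1" using k by simp
  have a: "\<sigma> (k - 1) < length L - 1" "L ! k = L ! (\<sigma> (k - 1))"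
    using s[rule_format, OF k1] k by simp_all
  have sk: "\<sigma> (k - 1) = k"
    using count_one_unique[OF c, of "\<sigma> (k - 1)" k] a k by simp
  show eq: "L ! (k - 1) = L ! (k + 1)" using restrict_bal[OF k s sk] by simp_all
  have b: "balL (rem L k)" using restrict_bal[OF k s sk] by simp_all
  show st: "set (rem L k) = set L - {L ! k}"
  proof
    show "set (rem L k) \<subseteq> set L - {L ! k}"
    proof
      fix v assume "v \<in> set (rem L k)"
      then obtain i where i: "i < length L - 2" "rem L k ! i = v"
        using k by (auto simp: in_set_conv_nth rem_length)
      let ?i = "if i < k then i else i + 2"
      have "L ! ?i = v" "?i < length L" "?i \<noteq> k" using i k by (auto simp: rem_nth)
      then show "v \<in> set L - {L ! k}"
        using count_one_unique[OF c, of ?i k] k by (auto simp: in_set_conv_nth)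
    qed
  next
    show "set L - {L ! k} \<subseteq> set (rem L k)"
    proof
      fix v assume "v \<in> set L - {L ! k}"
      then obtain i where i: "i < length L" "L ! i = v" "i \<noteq> k"
        by (auto simp: in_set_conv_nth)
      define i' where "i' = (if i = k + 1 then k - 1 else i)"
      have i': "i' < length L" "L ! i' = v" "i' \<noteq> k" "i' \<noteq> k + 1"
        using i k eq by (auto simp: i'_def)
      let ?j = "if i' < k then i' else i' - 2"
      have h: "\<not> i' < k \<Longrightarrow> Suc (Suc (i' - 2)) = i'" using i' by arith
      have "?j < length L - 2" "rem L k ! ?j = v" using i' k h by (auto simp: rem_nth)
      then show "v \<in> set (rem L k)" using k by (auto simp: in_set_conv_nth rem_length)
    qed
  qed
  have ne: "L \<noteq> []" "hd L = last L" "length L + 1 = 2 * card (set L)" using g by (auto simp: good_def)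
  have "L ! k \<in> set L" using k by simp
  then have card: "card (set (rem L k)) = card (set L) - 1" using st by simp
  have hd: "hd (rem L k) = hd L" using k ne by (simp add: rem_def hd_append)
  have last: "last (rem L k) = last L"
  proof (cases "k + 2 < length L")
    case True then show ?thesis by (simp add: rem_def last_append)
  next
    case False then have "k + 2 = length L" using k by simp
    then have h: "length L - Suc 0 = Suc k" by simp
    then show ?thesis using eq k ne h
      by (simp add: rem_def last_conv_nth nth_append min_def)
  qed
  have rn: "rem L k \<noteq> []" using k by (simp add: rem_def)
  have "length (rem L k) + 1 = 2 * card (set (rem L k))"
    using ne(3) card k by (simp add: rem_length)
  then show "good (rem L k)" using rn hd last ne b by (simp add: good_def)
qed

lemma good_hd_count:
  assumes g: "good L" and l: "length L \<noteq> 1"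
  shows "count_list L (hd L) \<ge> 2"
proof -
  have ne: "L \<noteq> []" "hd L = last L" using g by (auto simp: good_def)
  then have "length L \<noteq> 0" by simp
  then have "length L \<ge> 2" using l by linarith
  then show ?thesis using count_two[of 0 "length L - 1" L "hd L"] ne
    by (simp add: hd_conv_nth last_conv_nth)
qed

lemma decomp:
  assumes g: "good L" and l: "length L \<noteq> 1"
  shows "\<exists>k. 0 < k \<and> k + 2 \<le> length L \<and> count_list L (L ! k) = 1 \<and> L ! k \<noteq> hd L"
proof -
  have ne: "L \<noteq> []" "hd L = last L" "length L + 1 = 2 * card (set L)" using g by (auto simp: good_def)
  have c2: "count_list L (hd L) \<ge> 2" using good_hd_count[OF g l] .
  have hs: "hd L \<in> set L" using ne by simp
  have "\<exists>v \<in> set L - {hd L}. count_list L v < 2"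
  proof (rule ccontr)
    assume "\<not> ?thesis"
    then have a: "\<forall>v \<in> set L - {hd L}. count_list L v \<ge> 2" by (simp add: not_less)
    have "length L = sum (count_list L) (set L)" using sum_count_set[of L "set L"] by simp
    also have "\<dots> = count_list L (hd L) + sum (count_list L) (set L - {hd L})"
      using hs by (simp add: sum.remove)
    also have "\<dots> \<ge> 2 + sum (\<lambda>_. 2) (set L - {hd L})"
      using c2 a by (intro add_mono sum_mono) auto
    finally have "length L \<ge> 2 + 2 * (card (set L) - 1)" using hs by simp
    moreover have "card (set L) \<ge> 1" using hs by (metis One_nat_def Suc_leI card_gt_0_iff empty_iff finite_set)
    ultimately show False using ne(3) by linarith
  qed
  then obtain v where v: "v \<in> set L" "v \<noteq> hd L" "count_list L v < 2" by blast
  have "count_list L v \<noteq> 0" using v(1) count_list_0_iff by metis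
  then have c1: "count_list L v = 1" using v(3) by simp
  obtain k where k: "k < length L" "L ! k = v" using v(1) by (auto simp: in_set_conv_nth)
  have "k \<noteq> 0"
  proof
    assume "k = 0" then have "v = hd L" using k ne by (simp add: hd_conv_nth)
    then show False using v by simp
  qed
  moreover have "k \<noteq> length L - 1" using k v ne by (auto simp: last_conv_nth)
  ultimately show ?thesis using k v c1 by (intro exI[of _ k]) auto
qed

lemma bipartite:
  "good L \<Longrightarrow> i < length L \<Longrightarrow> j < length L \<Longrightarrow> L ! i = L ! j \<Longrightarrow> (even i \<longleftrightarrow> even j)"
proof (induction "length L" arbitrary: L i j rule: less_induct)
  case less
  show ?case
  proof (cases "length L = 1")
    case True then show ?thesis using less by simp
  next
    case False
    obtain k where k: "0 < k" "k + 2 \<le> length L" "count_list L (L ! k) = 1"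
      using decomp[OF less(2) False] by blast
    note r = good_rem[OF less(2) k]
    define f where "f i = (if i = k + 1 then k - 1 else i)" for i
    have f: "L ! f x = L ! x" "even (f x) = even x" "f x < length L" "f x \<noteq> k + 1" if "x < length L" for x
      using that k r(1) by (auto simp: f_def)
    have fi: "L ! f i = L ! f j" "f i < length L" "f j < length L" using f less by auto
    show ?thesis
    proof (cases "f i = k \<or> f j = k")
      case True
      then have "f i = f j" using count_one_unique[OF k(3), of "f i" k] count_one_unique[OF k(3), of "f j" k] fi k
        by auto
      then show ?thesis using f less by metis
    next
      case False
      define g where "g x = (if x < k then x else x - 2)" for x
      have gg: "g (f x) < length (rem L k)" "rem L k ! g (f x) = L ! x" "even (g (f x)) = even x"
        if "x < length L" "f x \<noteq> k" for x
      proof -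
        note fx = f[OF that(1)]
        show "g (f x) < length (rem L k)" using fx that k by (auto simp: g_def rem_length)
        show "even (g (f x)) = even x" using fx that k by (auto simp: g_def)
        show "rem L k ! g (f x) = L ! x"
        proof (cases "f x < k")
          case True then show ?thesis using fx that k by (simp add: g_def rem_nth)
        next
          case c: False
          then have "f x \<ge> k + 2" using fx that by simp
          then have "g (f x) = f x - 2" "\<not> g (f x) < k" "g (f x) < length L - 2" "g (f x) + 2 = f x"
            using fx by (auto simp: g_def)
          then show ?thesis using fx k by (simp add: rem_nth)
        qed
      qed
      have "length (rem L k) < length L" using k by (simp add: rem_length)
      from less(1)[OF this r(2), of "g (f i)" "g (f j)"] show ?thesis
        using gg[of i] gg[of j] less False by simp
    qed
  qed
qed



definition S :: "'a \<Rightarrow> 'a set \<Rightarrow> ('a \<Rightarrow> nat) \<Rightarrow> 'a list set" where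
  "S r B d = {L. good L \<and> hd L = r \<and> blackL L = B \<and> count_list L = d}"

lemma card_idx: "card {j. j < length xs \<and> xs ! j = x} = count_list xs x"
proof -
  have "card {j. j < length xs \<and> xs ! j = x} = card {j. j < length xs \<and> x = xs ! j}"
    by (metis (mono_tags, lifting) Collect_cong)
  also have "\<dots> = length (filter ((=) x) xs)" by (simp add: length_filter_conv_card)
  finally show ?thesis by (simp add: count_list_eq_length_filter)
qed

lemma S_set: assumes "L \<in> S r B d" shows "set L = {v. d v \<noteq> 0}"
proof -
  have "count_list L = d" using assms by (simp add: S_def)
  have "v \<in> set L \<longleftrightarrow> count_list L v \<noteq> 0" for v by (simp add: count_list_0_iff)
  then show ?thesis using \<open>count_list L = d\<close> by auto
qed

lemma S_length: assumes "L \<in> S r B d" shows "length L = sum d {v. d v \<noteq> 0}"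
proof -
  have "count_list L = d" using assms by (simp add: S_def)
  moreover have "sum (count_list L) (set L) = length L" by (rule sum_count_set) auto
  ultimately show ?thesis using S_set[OF assms] by simp
qed

lemma finite_S: assumes "finite {v. d v \<noteq> 0}" shows "finite (S r B d)"
proof (rule finite_subset)
  show "S r B d \<subseteq> {xs. set xs \<subseteq> {v. d v \<noteq> 0} \<and> length xs = sum d {v. d v \<noteq> 0}}"
  proof
    fix L assume L: "L \<in> S r B d"
    show "L \<in> {xs. set xs \<subseteq> {v. d v \<noteq> 0} \<and> length xs = sum d {v. d v \<noteq> 0}}"
      using S_set[OF L] S_length[OF L] by simp
  qed
  show "finite {xs. set xs \<subseteq> {v. d v \<noteq> 0} \<and> length xs = sum d {v. d v \<noteq> 0}}"
    by (rule finite_lists_length_eq[OF assms])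
qed

lemma blackL_subset: "blackL L \<subseteq> set L"
  by (auto simp: blackL_def)

lemma ins_y_unique:
  assumes j: "j < length L" and y: "y \<notin> set L" and i: "i < length L + 2" "ins L j y ! i = y"
  shows "i = Suc j"
proof -
  have c: "count_list (ins L j y) y = 1" using count_ins[OF j, of y y] y j
    by (metis add.right_neutral count_notin nth_mem plus_1_eq_Suc add_0)
  show ?thesis using count_one_unique[OF c, of i "Suc j"] i j by (simp add: ins_nth)
qed

lemma step:
  assumes fin: "finite {v. d v \<noteq> 0}" and y: "d y = 1" "y \<noteq> r"
    and BV: "B \<subseteq> {v. d v \<noteq> 0}"
    and X: "X = (if y \<in> B then {v. d v \<noteq> 0} - B else B)"
  shows "card (S r B d) = (\<Sum>x\<in>X. (d x - 1) * card (S r (B - {y}) (d(y := 0, x := d x - 1))))"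
proof -
  define D where "D x = d(y := 0, x := d x - 1)" for x
  define P where "P = Sigma X (\<lambda>x. Sigma (S r (B - {y}) (D x)) (\<lambda>L'. {j. j < length L' \<and> L' ! j = x}))"
  define F where "F = (\<lambda>(x :: 'a, L', j). ins L' j y)"
  have finX: "finite X" using X fin BV finite_subset by auto
  have yX: "y \<notin> X" using X by auto
  have finD: "finite {v. D x v \<noteq> 0}" for x
    by (rule finite_subset[OF _ fin]) (auto simp: D_def)
  have memP: "(x, L', j) \<in> P \<longleftrightarrow> x \<in> X \<and> L' \<in> S r (B - {y}) (D x) \<and> j < length L' \<and> L' ! j = x"
    for x L' j by (simp add: P_def)
  have inj: "inj_on F P"
  proof (rule inj_onI)
    fix a b assume a: "a \<in> P" and b: "b \<in> P" and e: "F a = F b"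
    obtain x L' j where a': "a = (x, L', j)" by (cases a) auto
    obtain x2 L2 j2 where b': "b = (x2, L2, j2)" by (cases b) auto
    have A: "x \<in> X" "L' \<in> S r (B - {y}) (D x)" "j < length L'" "L' ! j = x" using a a' memP by auto
    have B2: "x2 \<in> X" "L2 \<in> S r (B - {y}) (D x2)" "j2 < length L2" "L2 ! j2 = x2" using b b' memP by auto
    have yn: "y \<notin> set L'" "y \<notin> set L2" using A(2) B2(2) yX A(1) B2(1)
      by (auto simp: S_def D_def count_list_0_iff[symmetric])
    have e': "ins L' j y = ins L2 j2 y" using e a' b' by (simp add: F_def)
    have "ins L' j y ! Suc j = y" using A(3) by (simp add: ins_nth)
    then have "ins L2 j2 y ! Suc j = y" using e' by simp
    moreover have "length L' = length L2" using arg_cong[OF e', of length] A(3) B2(3) by simp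
    moreover have "Suc j < length L2 + 2" using A(3) calculation by simp
    ultimately have "Suc j = Suc j2" using ins_y_unique[OF B2(3) yn(2)] by auto
    then have jj: "j = j2" by simp
    have "L' = L2" using rem_ins[OF A(3), of y] rem_ins[OF B2(3), of y] e' jj by metis
    then show "a = b" using a' b' A(4) B2(4) jj by simp
  qed
  have img: "F ` P = S r B d"
  proof
    show "F ` P \<subseteq> S r B d"
    proof
      fix L assume "L \<in> F ` P"
      then obtain x L' j where p: "(x, L', j) \<in> P" and L: "L = ins L' j y" by (auto simp: F_def)
      have A: "x \<in> X" "L' \<in> S r (B - {y}) (D x)" "j < length L'" "L' ! j = x" using p memP by auto
      have xy: "x \<noteq> y" using A(1) yX by auto
      have S': "good L'" "hd L' = r" "blackL L' = B - {y}" "count_list L' = D x" using A(2) by (auto simp: S_def)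
      have yn: "y \<notin> set L'" using S'(4) xy by (auto simp: D_def count_list_0_iff[symmetric])
      have g: "good L" using good_ins[OF S'(1) yn A(3)] L by simp
      have ne: "L' \<noteq> []" using A(3) by auto
      have h: "hd L = r" using S'(2) ne L by (simp add: ins_def hd_append)
      have cx: "count_list L' x \<ge> 1" using A(3,4) count_list_0_iff
        by (metis less_one not_le nth_mem)
      then have dx: "d x \<ge> 2" using S'(4) xy by (auto simp: D_def fun_eq_iff)
      have c: "count_list L = d"
      proof
        fix v show "count_list L v = d v"
          using count_ins[OF A(3), of y v] L S'(4) A(4) xy dx y by (auto simp: D_def)
      qed
      have bl: "blackL L = B"
      proof (cases "y \<in> B")
        case True
        then have "x \<notin> B" using A(1) X by auto
        then have "x \<notin> blackL L'" using S'(3) by auto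
        then have "odd j" using A(3,4) by (auto simp: blackL_iff)
        then show ?thesis using blackL_ins[OF A(3), of y] L S'(3) True by auto
      next
        case False
        then have xb: "x \<in> blackL L'" using A(1) X S'(3) by auto
        then obtain t where t: "t < length L'" "even t" "L' ! t = x" by (auto simp: blackL_iff)
        then have "even j" using bipartite[OF S'(1) t(1) A(3)] A(4) by simp
        then show ?thesis using blackL_ins[OF A(3), of y] L S'(3) False by auto
      qed
      show "L \<in> S r B d" using g h c bl by (simp add: S_def)
    qed
  next
    show "S r B d \<subseteq> F ` P"
    proof
      fix L assume L: "L \<in> S r B d"
      have S0: "good L" "hd L = r" "blackL L = B" "count_list L = d" using L by (auto simp: S_def)
      have ne: "L \<noteq> []" "hd L = last L" using S0 by (auto simp: good_def)
      have cy: "count_list L y = 1" using S0(4) y by simp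
      then have "y \<in> set L" by (metis count_notin zero_neq_one)
      then obtain k where k: "k < length L" "L ! k = y" by (auto simp: in_set_conv_nth)
      have k0: "k \<noteq> 0"
      proof
        assume "k = 0" then have "y = hd L" using k ne by (simp add: hd_conv_nth)
        then show False using y S0 by simp
      qed
      have k1: "k \<noteq> length L - 1"
      proof
        assume "k = length L - 1" then have "y = last L" using k ne by (simp add: last_conv_nth)
        then show False using y S0 ne by simp
      qed
      have kk: "0 < k" "k + 2 \<le> length L" using k0 k1 k by auto
      have ck: "count_list L (L ! k) = 1" using k cy by simp
      note r = good_rem[OF S0(1) kk ck]
      define L' where "L' = rem L k"
      define x where "x = L ! (k - 1)"
      have Lins: "ins L' (k - 1) y = L" using ins_rem[OF kk r(1)] k by (simp add: L'_def)
      have j: "k - 1 < length L'" using kk by (simp add: L'_def rem_length)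
      have km: "k - 1 < length L" using kk by simp
      have xy: "x \<noteq> y" using count_one_unique[OF cy km k(1)] k kk by (auto simp: x_def)
      have Lj: "L' ! (k - 1) = x" using kk by (simp add: L'_def x_def rem_nth)
      have yn: "y \<notin> set L'" using r(3) k by (simp add: L'_def)
      have cL': "count_list L' = D x"
      proof
        fix v
        have "count_list L v = count_list L' v + (if v = y then 1 else 0) + (if v = x then 1 else 0)"
          using count_ins[OF j, of y v] Lins Lj by simp
        then show "count_list L' v = D x v" using S0(4) xy yn by (auto simp: D_def)
      qed
      have hL': "hd L' = r" using kk S0(2) ne by (simp add: L'_def rem_def hd_append)
      have xX_bl: "x \<in> X \<and> blackL L' = B - {y}"
      proof (cases "y \<in> B")
        case True
        then obtain t where t: "t < length L" "even t" "L ! t = y" using S0(3) by (auto simp: blackL_iff)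
        then have "t = k" using count_one_unique[OF cy t(1) k(1)] k by simp
        then have ek: "even k" using t by simp
        have "x \<notin> B"
        proof
          assume "x \<in> B"
          then obtain t' where t': "t' < length L" "even t'" "L ! t' = x" using S0(3) by (auto simp: blackL_iff)
          have "even (k - 1)" using bipartite[OF S0(1) t'(1), of "k - 1"] t' kk by (simp add: x_def)
          then show False using ek kk by simp
        qed
        moreover have "x \<in> set L" using kk by (simp add: x_def)
        then have "d x \<noteq> 0" using S0(4) count_list_0_iff by metis
        moreover have "odd (k - 1)" using ek kk by simp
        then have "B = insert y (blackL L')" using blackL_ins[OF j, of y] Lins S0(3) by simp
        moreover have "y \<notin> blackL L'" using yn blackL_subset[of L'] by blast
        ultimately show ?thesis using X True by auto
      next
        case False
        have "odd k"
        proof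
          assume "even k" then have "y \<in> blackL L" using k by (auto simp: blackL_iff)
          then show False using False S0(3) by simp
        qed
        then have ek: "even (k - 1)" using kk by simp
        then have "x \<in> blackL L" using kk by (auto simp: blackL_iff x_def intro!: exI[of _ "k - 1"])
        then show ?thesis using X False S0(3) blackL_ins[OF j, of y] Lins ek by auto
      qed
      have "L' \<in> S r (B - {y}) (D x)" using r(2) hL' cL' xX_bl by (simp add: S_def L'_def)
      then have "(x, L', k - 1) \<in> P" using memP xX_bl j Lj by simp
      then show "L \<in> F ` P" using Lins by (force simp: F_def)
    qed
  qed
  have finS: "finite (S r (B - {y}) (D x))" for x using finite_S[OF finD] .
  have "card (S r B d) = card P" using card_image[OF inj] img by simp
  also have "\<dots> = (\<Sum>x\<in>X. \<Sum>L'\<in>S r (B - {y}) (D x). card {j. j < length L' \<and> L' ! j = x})"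
    unfolding P_def using finX finS by (simp add: card_SigmaI)
  also have "\<dots> = (\<Sum>x\<in>X. \<Sum>L'\<in>S r (B - {y}) (D x). d x - 1)"
  proof (rule sum.cong[OF refl], rule sum.cong[OF refl])
    fix x L' assume "x \<in> X" "L' \<in> S r (B - {y}) (D x)"
    then have "count_list L' x = d x - 1" using yX by (auto simp: S_def D_def)
    then show "card {j. j < length L' \<and> L' ! j = x} = d x - 1" by (simp add: card_idx)
  qed
  also have "\<dots> = (\<Sum>x\<in>X. card (S r (B - {y}) (D x)) * (d x - 1))" by simp
  also have "\<dots> = (\<Sum>x\<in>X. (d x - 1) * card (S r (B - {y}) (D x)))"
    by (intro sum.cong refl) (simp add: mult.commute)
  finally show ?thesis by (simp add: D_def)
qed



lemma S_base: "S r {r} (\<lambda>v. if v = r then 1 else 0) = {[r]}"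
proof
  show "{[r]} \<subseteq> S r {r} (\<lambda>v. if v = r then 1 else 0)"
    using good_single[of r] by (auto simp: S_def blackL_def fun_eq_iff)
next
  show "S r {r} (\<lambda>v. if v = r then 1 else 0) \<subseteq> {[r]}"
  proof
    fix L assume L: "L \<in> S r {r} (\<lambda>v. if v = r then 1 else 0)"
    have "{v. (if v = r then 1 else 0) \<noteq> (0::nat)} = {r}" by auto
    then have "length L = 1" using S_length[OF L] by simp
    moreover have "hd L = r" using L by (simp add: S_def)
    ultimately show "L \<in> {[r]}" by (cases L) auto
  qed
qed

lemma sum_minus_one: "finite A \<Longrightarrow> \<forall>x\<in>A. (d x :: nat) \<ge> 1 \<Longrightarrow> sum (\<lambda>x. d x - 1) A + card A = sum d A"
proof (induction A rule: finite_induct)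
  case empty then show ?case by simp
next
  case (insert a A) then show ?case by simp
qed

lemma sum_upd_minus: "finite A \<Longrightarrow> x \<in> A \<Longrightarrow> (d x :: nat) \<ge> 1 \<Longrightarrow> sum (d(x := d x - 1)) A + 1 = sum d A"
proof -
  assume a: "finite A" "x \<in> A" "d x \<ge> 1"
  have "sum (d(x := d x - 1)) A = (d x - 1) + sum (d(x := d x - 1)) (A - {x})"
    using a by (simp add: sum.remove)
  also have "sum (d(x := d x - 1)) (A - {x}) = sum d (A - {x})" by (rule sum.cong) auto
  finally show ?thesis using a by (simp add: sum.remove)
qed

lemma Mcount:
  "finite V \<Longrightarrow> V = {v. d v \<noteq> 0} \<Longrightarrow> card V = Suc l \<Longrightarrow> 1 \<le> l \<Longrightarrow> r \<in> B \<Longrightarrow> B \<subseteq> V \<Longrightarrow>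
   sum d B = Suc l \<Longrightarrow> sum d (V - B) = l \<Longrightarrow>
   card (S r B d) = fact (card (V - B) - 1) * fact (card B - 1) * (d r - 1)"
proof (induction l arbitrary: V B d rule: less_induct)
  case (less l)
  note fin = less.prems(1) and Vd = less.prems(2) and cV = less.prems(3) and l1 = less.prems(4)
    and rB = less.prems(5) and BV = less.prems(6) and sB = less.prems(7) and sW = less.prems(8)
  define W where "W = V - B"
  have finB: "finite B" "finite W" using fin BV finite_subset by (auto simp: W_def)
  have cBW: "card B + card W = Suc l"
    using cV card_Diff_subset[OF finite_subset[OF BV fin] BV] card_mono[OF fin BV] by (simp add: W_def)
  have "sum d V = sum d (V - B) + sum d B" by (rule sum.subset_diff[OF BV fin])
  then have sV: "sum d V = Suc l + l" using sB sW by simp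
  have pos: "d v \<ge> 1" if "v \<in> V" for v using that Vd by auto
  have rV: "r \<in> V" using rB BV by auto
  show ?case
  proof (cases "d r = 1")
    case True
    have "S r B d = {}"
    proof (rule ccontr)
      assume "S r B d \<noteq> {}"
      then obtain L where L: "L \<in> S r B d" by blast
      have "length L = Suc l + l" using S_length[OF L] Vd sV by simp
      then have "length L \<noteq> 1" using l1 by simp
      then have "count_list L (hd L) \<ge> 2" using good_hd_count L by (auto simp: S_def)
      then show False using L True by (auto simp: S_def)
    qed
    then show ?thesis using True by simp
  next
    case False
    then have dr: "d r \<ge> 2" using pos[OF rV] by simp
    have "\<exists>y \<in> V - {r}. d y = 1"
    proof (rule ccontr)
      assume "\<not> ?thesis"
      then have a: "\<forall>v \<in> V - {r}. d v \<ge> 2" using pos by (metis DiffD1 One_nat_def Suc_1 le_antisym not_less_eq_eq)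
      have e: "sum d V = d r + sum d (V - {r})" using fin rV by (simp add: sum.remove)
      have "sum d (V - {r}) \<ge> sum (\<lambda>_. 2) (V - {r})" using a by (intro sum_mono) auto
      then have "sum d (V - {r}) \<ge> 2 * l" using cV fin rV by simp
      then have "sum d V \<ge> d r + 2 * l" using e by simp
      then show False using dr sV by simp
    qed
    then obtain y where y: "y \<in> V" "y \<noteq> r" "d y = 1" by blast
    define D where "D x = d(y := 0, x := d x - 1)" for x
    define X where "X = (if y \<in> B then {v. d v \<noteq> 0} - B else B)"
    have stp: "card (S r B d) = (\<Sum>x\<in>X. (d x - 1) * card (S r (B - {y}) (D x)))"
      unfolding D_def by (rule step) (use fin Vd y BV X_def in auto)
    have DV: "{v. D x v \<noteq> 0} = V - {y}" if "x \<in> V" "d x \<ge> 2" "x \<noteq> y" for x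
      using that Vd by (auto simp: D_def)
    show ?thesis
    proof (cases "y \<in> B")
      case yB: True
      have X: "X = W" using yB Vd by (simp add: X_def W_def)
      have "W \<noteq> {}"
      proof
        assume "W = {}" then have "sum d (V - B) = 0" by (metis W_def sum.empty)
        then show False using sW l1 by simp
      qed
      then have "card W \<ge> 1" using finB by (simp add: Suc_le_eq card_gt_0_iff)
      have "card B \<ge> 2"
      proof -
        have "{r, y} \<subseteq> B" using rB yB by auto
        then have "card {r, y} \<le> card B" using finB by (intro card_mono) auto
        then show ?thesis using y by simp
      qed
      then have l2: "l \<ge> 2" using cBW \<open>card W \<ge> 1\<close> by simp
      define K where "K = fact (card W - 1) * fact (card B - 2) * (d r - 1)"
      have trm: "(d x - 1) * card (S r (B - {y}) (D x)) = (d x - 1) * K" if x: "x \<in> W" for x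
      proof (cases "d x = 1")
        case True then show ?thesis by simp
      next
        case False
        have xV: "x \<in> V" "x \<notin> B" using x by (auto simp: W_def)
        then have dx: "d x \<ge> 2" using pos[of x] False by simp
        have xy: "x \<noteq> y" using xV yB by auto
        have IH: "card (S r (B - {y}) (D x)) =
          fact (card ((V - {y}) - (B - {y})) - 1) * fact (card (B - {y}) - 1) * (D x r - 1)"
        proof (rule less.IH[of "l - 1"])
          show "l - 1 < l" "1 \<le> l - 1" using l2 by auto
          show "finite (V - {y})" using fin by simp
          show "V - {y} = {v. D x v \<noteq> 0}" using DV[OF xV(1) dx xy] by simp
          show "card (V - {y}) = Suc (l - 1)" using cV y fin l2 by simp
          show "r \<in> B - {y}" "B - {y} \<subseteq> V - {y}" using rB y BV by auto
          have "sum (D x) (B - {y}) = sum d (B - {y})" using xV by (intro sum.cong) (auto simp: D_def)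
          also have "\<dots> + d y = sum d B" using finB yB by (simp add: sum.remove)
          finally show "sum (D x) (B - {y}) = Suc (l - 1)" using sB y l2 by simp
          have "V - {y} - (B - {y}) = W" using yB by (auto simp: W_def)
          moreover have "sum (D x) W = sum (d(x := d x - 1)) W" using yB by (intro sum.cong) (auto simp: D_def W_def)
          moreover have "sum (d(x := d x - 1)) W + 1 = sum d W" using sum_upd_minus[OF finB(2) x] dx by simp
          ultimately show "sum (D x) (V - {y} - (B - {y})) = l - 1" using sW by (simp add: W_def)
        qed
        have "V - {y} - (B - {y}) = W" using yB by (auto simp: W_def)
        moreover have "card (B - {y}) - 1 = card B - 2" using yB finB by simp
        moreover have "D x r = d r" using xV rB y by (auto simp: D_def)
        ultimately show ?thesis using IH by (simp add: K_def)
      qed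
      have "card (S r B d) = (\<Sum>x\<in>W. (d x - 1) * card (S r (B - {y}) (D x)))" using stp X by simp
      also have "\<dots> = (\<Sum>x\<in>W. (d x - 1) * K)" by (rule sum.cong[OF refl trm])
      also have "\<dots> = sum (\<lambda>x. d x - 1) W * K" by (simp add: sum_distrib_right)
      also have "sum (\<lambda>x. d x - 1) W = card B - 1"
      proof -
        have posW: "\<forall>x\<in>W. d x \<ge> 1" using pos by (auto simp: W_def)
        have "sum (\<lambda>x. d x - 1) W + card W = sum d W" using sum_minus_one[OF finB(2) posW] .
        moreover have "sum d W = l" using sW by (simp add: W_def)
        ultimately show ?thesis using cBW by linarith
      qed
      finally have "card (S r B d) = (card B - 1) * K" .
      also have "\<dots> = fact (card W - 1) * fact (card B - 1) * (d r - 1)"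
      proof -
        have "(card B - 1) * fact (card B - 2) = fact (card B - 1)"
        proof -
          obtain m where m: "card B = 2 + m" using le_Suc_ex[OF \<open>card B \<ge> 2\<close>] by blast
          show ?thesis using m by (simp add: numeral_2_eq_2)
        qed
        moreover have "(card B - 1) * K = fact (card W - 1) * ((card B - 1) * fact (card B - 2)) * (d r - 1)"
          unfolding K_def by (simp only: ac_simps)
        ultimately show ?thesis by simp
      qed
      finally show ?thesis by (simp add: W_def)
    next
      case yB: False
      have X: "X = B" using yB by (simp add: X_def)
      have yW: "y \<in> W" using y yB by (simp add: W_def)
      show ?thesis
      proof (cases "l = 1")
        case True
        have V2: "V = {r, y}"
        proof -
          have "{r, y} \<subseteq> V" using rV y by auto
          moreover have "card {r, y} = card V" using cV True y by simp
          ultimately show ?thesis using fin by (metis card_subset_eq)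
        qed
        have Br: "B = {r}" using V2 rB yB BV by auto
        have Wy: "W = {y}" using V2 Br y by (auto simp: W_def)
        have d2: "d r = 2" using sB Br True by simp
        have "D r = (\<lambda>v. if v = r then 1 else 0)"
        proof
          fix v
          have dz: "d v = 0" if "v \<noteq> r" "v \<noteq> y"
          proof -
            have "v \<notin> V" using that V2 by auto
            then show ?thesis using Vd by blast
          qed
          show "D r v = (if v = r then 1 else 0)"
          proof (cases "v = r")
            case True then show ?thesis using d2 y by (simp add: D_def)
          next
            case False then show ?thesis using dz by (cases "v = y") (simp_all add: D_def)
          qed
        qed
        then have "card (S r (B - {y}) (D r)) = 1" using S_base[of r] Br yB by simp
        moreover have "V - B = {y}" using Wy by (simp add: W_def)
        ultimately show ?thesis using stp X Br d2 by simp
      next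
        case False
        then have l2: "l \<ge> 2" using l1 by simp
        have "W - {y} \<noteq> {}"
        proof
          assume "W - {y} = {}"
          then have "W = {y}" using yW by auto
          then show False using sW y l2 by (simp add: W_def)
        qed
        then have "card (W - {y}) \<ge> 1" using finB by (simp add: Suc_le_eq card_gt_0_iff)
        then have cW2: "card W \<ge> 2" using yW finB by (simp add: card_Diff_singleton)
        define K :: nat where "K = fact (card W - 2) * fact (card B - 1)"
        have trm: "(d x - 1) * card (S r (B - {y}) (D x)) = (d x - 1) * (K * (d r - 1 - (if x = r then 1 else 0)))"
          if x: "x \<in> B" for x
        proof (cases "d x = 1")
          case True then show ?thesis by simp
        next
          case False
          have xV: "x \<in> V" using x BV by auto
          then have dx: "d x \<ge> 2" using pos[of x] False by simp
          have xy: "x \<noteq> y" using x yB by auto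
          have By: "B - {y} = B" using yB by simp
          have IH: "card (S r (B - {y}) (D x)) =
            fact (card ((V - {y}) - (B - {y})) - 1) * fact (card (B - {y}) - 1) * (D x r - 1)"
          proof (rule less.IH[of "l - 1"])
            show "l - 1 < l" "1 \<le> l - 1" using l2 by auto
            show "finite (V - {y})" using fin by simp
            show "V - {y} = {v. D x v \<noteq> 0}" using DV[OF xV dx xy] by simp
            show "card (V - {y}) = Suc (l - 1)" using cV y fin l2 by simp
            show "r \<in> B - {y}" "B - {y} \<subseteq> V - {y}" using rB y BV by auto
            have "sum (D x) B = sum (d(x := d x - 1)) B" using yB by (intro sum.cong) (auto simp: D_def)
            moreover have "sum (d(x := d x - 1)) B + 1 = sum d B" using sum_upd_minus[OF finB(1) x] dx by simp
            ultimately show "sum (D x) (B - {y}) = Suc (l - 1)" using sB By l2 by simp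
            have e: "V - {y} - (B - {y}) = W - {y}" by (auto simp: W_def)
            have "sum (D x) (W - {y}) = sum d (W - {y})" using x by (intro sum.cong) (auto simp: D_def W_def)
            moreover have "sum d (W - {y}) + d y = sum d W" using finB yW by (simp add: sum.remove)
            ultimately show "sum (D x) (V - {y} - (B - {y})) = l - 1" using sW y e by (simp add: W_def)
          qed
          have "card ((V - {y}) - (B - {y})) - 1 = card W - 2"
          proof -
            have "V - {y} - (B - {y}) = W - {y}" by (auto simp: W_def)
            then show ?thesis using yW finB by (simp add: card_Diff_singleton)
          qed
          moreover have "D x r - 1 = d r - 1 - (if x = r then 1 else 0)" using y by (auto simp: D_def)
          ultimately show ?thesis using IH By by (simp add: K_def)
        qed
        define a where "a = d r - 1"
        define s where "s = sum (\<lambda>x. d x - 1) (B - {r})"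
        have as: "a + s = card W"
        proof -
          have "sum (\<lambda>x. d x - 1) B = a + s" using finB rB by (simp add: a_def s_def sum.remove)
          moreover have "sum (\<lambda>x. d x - 1) B + card B = sum d B"
            using sum_minus_one[OF finB(1), of d] pos BV by auto
          ultimately show ?thesis using sB cBW by simp
        qed
        have "card (S r B d) = (\<Sum>x\<in>B. (d x - 1) * card (S r (B - {y}) (D x)))" using stp X by simp
        also have "\<dots> = (\<Sum>x\<in>B. (d x - 1) * (K * (d r - 1 - (if x = r then 1 else 0))))"
          by (rule sum.cong[OF refl trm])
        also have "\<dots> = (d r - 1) * (K * (d r - 1 - 1)) + (\<Sum>x\<in>B - {r}. (d x - 1) * (K * (d r - 1 - (if x = r then 1 else 0))))"
          using finB rB by (simp add: sum.remove)
        also have "(\<Sum>x\<in>B - {r}. (d x - 1) * (K * (d r - 1 - (if x = r then 1 else 0)))) = s * (K * a)"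
          by (simp add: s_def a_def sum_distrib_right)
        finally have "card (S r B d) = K * (a * (a - 1) + s * a)" by (simp add: a_def algebra_simps)
        also have "a * (a - 1) + s * a = a * (card W - 1)"
        proof -
          obtain a' where a': "a = Suc a'" using dr by (cases a) (auto simp: a_def)
          then have "card W - 1 = a' + s" using as by simp
          then show ?thesis using a' by (simp add: algebra_simps)
        qed
        finally have "card (S r B d) = K * (card W - 1) * a" by simp
        also have "K * (card W - 1) = fact (card W - 1) * fact (card B - 1)"
        proof -
          have "(card W - 1) * fact (card W - 2) = fact (card W - 1)"
          proof -
            obtain m where m: "card W = 2 + m" using le_Suc_ex[OF cW2] by blast
            show ?thesis using m by (simp add: numeral_2_eq_2)
          qed
          moreover have "K * (card W - 1) = ((card W - 1) * fact (card W - 2)) * fact (card B - 1)"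
            unfolding K_def by (simp only: ac_simps)
          ultimately show ?thesis by (simp only: ac_simps)
        qed
        finally show ?thesis by (simp add: W_def a_def)
      qed
    qed
  qed
qed



definition Comp :: "'a set \<Rightarrow> nat \<Rightarrow> ('a \<Rightarrow> nat) set" where
  "Comp A n = {f. (\<forall>v. v \<notin> A \<longrightarrow> f v = 0) \<and> (\<forall>v\<in>A. f v \<ge> 1) \<and> sum f A = n}"

lemma Comp_single: "Comp {a} (Suc n) = {\<lambda>v. if v = a then Suc n else 0}"
  by (auto simp: Comp_def fun_eq_iff)

lemma finite_Comp: assumes "finite A" shows "finite (Comp A n)"
proof (rule finite_subset[OF _ finite_set_of_finite_funs[OF assms, of "{..n}" 0]])
  show "Comp A n \<subseteq> {f. \<forall>x. (x \<in> A \<longrightarrow> f x \<in> {..n}) \<and> (x \<notin> A \<longrightarrow> f x = 0)}"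
  proof
    fix f assume f: "f \<in> Comp A n"
    have "f x \<le> n" if "x \<in> A" for x
    proof -
      have "f x \<le> sum f A" by (rule member_le_sum) (use that assms in auto)
      then show ?thesis using f by (simp add: Comp_def)
    qed
    then show "f \<in> {f. \<forall>x. (x \<in> A \<longrightarrow> f x \<in> {..n}) \<and> (x \<notin> A \<longrightarrow> f x = 0)}"
      using f by (auto simp: Comp_def)
  qed
qed (simp)

lemma sum_choose_lessThan: "(\<Sum>i<n. i choose m) = n choose Suc m"
proof (cases n)
  case 0 then show ?thesis by simp
next
  case (Suc k) show ?thesis unfolding Suc lessThan_Suc_atMost by (rule sum_choose_upper)
qed

lemma sum_ge_card: "finite A \<Longrightarrow> \<forall>v\<in>A. (f v :: nat) \<ge> 1 \<Longrightarrow> sum f A \<ge> card A"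
  using sum_mono[of A "\<lambda>_. 1" f] by simp

lemma card_Comp:
  "finite A \<Longrightarrow> A \<noteq> {} \<Longrightarrow> card (Comp A (Suc n)) = n choose (card A - 1)"
proof (induction A arbitrary: n rule: finite_ne_induct)
  case (singleton a) then show ?case by (simp add: Comp_single)
next
  case (insert a A)
  define G where "G = (\<lambda>(i :: nat, g :: 'a \<Rightarrow> nat). g(a := Suc i))"
  define P where "P = Sigma {..<n} (\<lambda>i. Comp A (n - i))"
  have inj: "inj_on G P"
  proof (rule inj_onI)
    fix p q assume p: "p \<in> P" and q: "q \<in> P" and e: "G p = G q"
    obtain i g where pi: "p = (i, g)" by (cases p)
    obtain j h where qj: "q = (j, h)" by (cases q)
    have "g a = 0" "h a = 0" using p q pi qj insert.hyps by (auto simp: P_def Comp_def)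
    moreover have "g(a := Suc i) = h(a := Suc j)" using e pi qj by (simp add: G_def)
    ultimately have "i = j" "g = h" by (metis fun_upd_same nat.inject, metis fun_upd_idem fun_upd_upd)
    then show "p = q" using pi qj by simp
  qed
  have img: "G ` P = Comp (insert a A) (Suc n)"
  proof
    show "G ` P \<subseteq> Comp (insert a A) (Suc n)"
    proof
      fix f assume "f \<in> G ` P"
      then obtain i g where ig: "i < n" "g \<in> Comp A (n - i)" "f = g(a := Suc i)"
        by (auto simp: P_def G_def)
      have "sum f (insert a A) = Suc i + sum g A"
        using insert.hyps ig(3) by (simp add: sum.insert) (intro sum.cong, auto)
      also have "sum g A = n - i" using ig(2) by (simp add: Comp_def)
      finally have "sum f (insert a A) = Suc n" using ig(1) by simp
      then show "f \<in> Comp (insert a A) (Suc n)" using ig(2,3) by (auto simp: Comp_def)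
    qed
  next
    show "Comp (insert a A) (Suc n) \<subseteq> G ` P"
    proof
      fix f assume f: "f \<in> Comp (insert a A) (Suc n)"
      have f1: "\<forall>v. v \<notin> insert a A \<longrightarrow> f v = 0" "\<forall>v\<in>insert a A. f v \<ge> 1" "sum f (insert a A) = Suc n"
        using f by (auto simp: Comp_def)
      have s: "f a + sum f A = Suc n" using f1(3) insert.hyps by simp
      have "sum f A \<ge> card A" using sum_ge_card[OF insert.hyps(1)] f1(2) by auto
      moreover have "card A \<ge> 1" using insert.hyps by (simp add: Suc_le_eq card_gt_0_iff)
      ultimately have fa: "f a \<ge> 1" "f a - 1 < n" using s f1(2) by auto
      define g where "g = f(a := 0)"
      have sg: "sum g A = sum f A" using insert.hyps by (intro sum.cong) (auto simp: g_def)
      have "g \<in> Comp A (n - (f a - 1))"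
        using f1 s sg fa insert.hyps by (auto simp: Comp_def g_def)
      then have "(f a - 1, g) \<in> P" using fa by (simp add: P_def)
      moreover have "G (f a - 1, g) = f" using fa by (auto simp: G_def g_def fun_eq_iff)
      ultimately show "f \<in> G ` P" by force
    qed
  qed
  have "card (Comp (insert a A) (Suc n)) = card P" using card_image[OF inj] img by simp
  also have "\<dots> = (\<Sum>i<n. card (Comp A (n - i)))" unfolding P_def
    by (rule card_SigmaI) (auto intro: finite_Comp insert.hyps)
  also have "\<dots> = (\<Sum>i<n. (n - Suc i) choose (card A - 1))"
  proof (rule sum.cong[OF refl])
    fix i assume "i \<in> {..<n}"
    then have "n - i = Suc (n - Suc i)" by simp
    then show "card (Comp A (n - i)) = (n - Suc i) choose (card A - 1)" using insert.IH by simp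
  qed
  also have "\<dots> = (\<Sum>i<n. i choose (card A - 1))" by (rule sum.nat_diff_reindex)
  also have "\<dots> = n choose Suc (card A - 1)" by (rule sum_choose_lessThan)
  also have "Suc (card A - 1) = card (insert a A) - 1"
    using insert.hyps by (simp add: Suc_le_eq card_gt_0_iff)
  finally show ?case .
qed



lemma edge_conv:
  assumes "T \<noteq> []" "e < length T"
  shows "edge_tail T e = (T @ [hd T]) ! e" "edge_head T e = (T @ [hd T]) ! Suc e"
proof -
  show "edge_tail T e = (T @ [hd T]) ! e" using assms by (simp add: edge_tail_def nth_append)
  show "edge_head T e = (T @ [hd T]) ! Suc e"
  proof (cases "Suc e < length T")
    case True then show ?thesis using assms by (simp add: edge_head_def nth_append)
  next
    case False then have "Suc e = length T" using assms by simp
    then show ?thesis using assms by (simp add: edge_head_def nth_append hd_conv_nth)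
  qed
qed

lemma balanced_iff: assumes ne: "T \<noteq> []" shows "balanced T \<longleftrightarrow> balL (T @ [hd T])"
proof -
  have len: "length (T @ [hd T]) - 1 = length T" by simp
  show ?thesis
  proof
    assume "balanced T"
    then obtain \<sigma> where s: "\<forall>e < length T.
      \<sigma> e < length T \<and> \<sigma> e \<noteq> e \<and> \<sigma> (\<sigma> e) = e \<and>
      edge_head T e = edge_tail T (\<sigma> e) \<and> edge_tail T e = edge_head T (\<sigma> e)"
      unfolding balanced_def by blast
    show "balL (T @ [hd T])" unfolding balL_def len
    proof (intro exI[of _ \<sigma>] allI impI)
      fix e assume e: "e < length T"
      note a = s[rule_format, OF e]
      show "\<sigma> e < length T \<and> \<sigma> e \<noteq> e \<and> \<sigma> (\<sigma> e) = e \<and>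
         (T @ [hd T]) ! Suc e = (T @ [hd T]) ! \<sigma> e \<and> (T @ [hd T]) ! e = (T @ [hd T]) ! Suc (\<sigma> e)"
        using a edge_conv[OF ne e] edge_conv[OF ne, of "\<sigma> e"] by simp
    qed
  next
    assume "balL (T @ [hd T])"
    then obtain \<sigma> where s: "\<forall>e < length T.
      \<sigma> e < length T \<and> \<sigma> e \<noteq> e \<and> \<sigma> (\<sigma> e) = e \<and>
      (T @ [hd T]) ! Suc e = (T @ [hd T]) ! \<sigma> e \<and> (T @ [hd T]) ! e = (T @ [hd T]) ! Suc (\<sigma> e)"
      unfolding balL_def len by blast
    show "balanced T" unfolding balanced_def
    proof (intro exI[of _ \<sigma>] allI impI)
      fix e assume e: "e < length T"
      note a = s[rule_format, OF e]
      show "\<sigma> e < length T \<and> \<sigma> e \<noteq> e \<and> \<sigma> (\<sigma> e) = e \<and>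
         edge_head T e = edge_tail T (\<sigma> e) \<and> edge_tail T e = edge_head T (\<sigma> e)"
        using a edge_conv[OF ne e] edge_conv[OF ne, of "\<sigma> e"] by simp
    qed
  qed
qed

lemma black_eq: assumes ne: "T \<noteq> []" shows "black T = blackL (T @ [hd T])"
proof
  show "black T \<subseteq> blackL (T @ [hd T])"
  proof
    fix x assume "x \<in> black T"
    then obtain t where t: "t < length T" "even t" "x = T ! t" by (auto simp: black_def)
    then show "x \<in> blackL (T @ [hd T])" unfolding blackL_def
      by (intro CollectI exI[of _ t]) (simp add: nth_append)
  qed
next
  show "blackL (T @ [hd T]) \<subseteq> black T"
  proof
    fix x assume "x \<in> blackL (T @ [hd T])"
    then obtain t where t: "t < Suc (length T)" "even t" "x = (T @ [hd T]) ! t" by (auto simp: blackL_def)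
    show "x \<in> black T"
    proof (cases "t < length T")
      case True then show ?thesis using t by (auto simp: black_def nth_append)
    next
      case False then have "x = T ! 0" using t ne by (simp add: nth_append hd_conv_nth)
      then show ?thesis using ne unfolding black_def by (intro CollectI exI[of _ 0]) auto
    qed
  qed
qed

lemma sum_count_filter: "finite A \<Longrightarrow> sum (count_list L) A = length (filter (\<lambda>x. x \<in> A) L)"
proof (induction L)
  case Nil then show ?case by simp
next
  case (Cons a L)
  have "sum (count_list (a # L)) A = sum (\<lambda>v. count_list L v + (if a = v then 1 else 0)) A"
    by (intro sum.cong) auto
  also have "\<dots> = sum (count_list L) A + sum (\<lambda>v. if a = v then 1 else 0) A"
    by (rule sum.distrib)
  also have "sum (\<lambda>v. if a = v then 1 else 0) A = (if a \<in> A then 1 else 0)"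
    using Cons.prems by (simp add: sum.delta)
  finally show ?case using Cons by simp
qed

lemma card_even: "card {i. i < Suc (2 * l) \<and> even i} = Suc l"
proof -
  have "{i. i < Suc (2 * l) \<and> even i} = (\<lambda>j. 2 * j) ` {..l}"
    by (auto elim!: evenE)
  then show ?thesis by (simp add: card_image inj_on_def)
qed

lemma card_odd: "card {i. i < Suc (2 * l) \<and> odd i} = l"
proof -
  have "{i. i < Suc (2 * l) \<and> odd i} = (\<lambda>j. Suc (2 * j)) ` {..<l}"
    by (auto elim!: oddE)
  then show ?thesis by (simp add: card_image inj_on_def)
qed

lemma color_sums:
  assumes g: "good L" and len: "length L = Suc (2 * l)"
  shows "sum (count_list L) (blackL L) = Suc l" "sum (count_list L) (set L - blackL L) = l"
proof -
  have iff: "L ! i \<in> blackL L \<longleftrightarrow> even i" if "i < length L" for i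
  proof
    assume "L ! i \<in> blackL L"
    then obtain t where "t < length L" "even t" "L ! t = L ! i" by (auto simp: blackL_iff)
    then show "even i" using bipartite[OF g _ that] by metis
  next
    assume "even i" then show "L ! i \<in> blackL L" using that by (auto simp: blackL_iff)
  qed
  have fb: "finite (blackL L)" by (rule finite_subset[OF blackL_subset]) simp
  have "sum (count_list L) (blackL L) = card {i. i < length L \<and> L ! i \<in> blackL L}"
    using sum_count_filter[OF fb, of L] by (simp add: length_filter_conv_card)
  also have "{i. i < length L \<and> L ! i \<in> blackL L} = {i. i < Suc (2 * l) \<and> even i}"
    using iff len by auto
  finally show "sum (count_list L) (blackL L) = Suc l" by (simp add: card_even)
  have "sum (count_list L) (set L - blackL L) = card {i. i < length L \<and> L ! i \<in> set L - blackL L}"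
    using sum_count_filter[of "set L - blackL L" L] by (simp add: length_filter_conv_card)
  also have "{i. i < length L \<and> L ! i \<in> set L - blackL L} = {i. i < Suc (2 * l) \<and> odd i}"
    using iff len by auto
  finally show "sum (count_list L) (set L - blackL L) = l" by (simp add: card_odd)
qed



lemma card_G:
  fixes V B :: "'a set" and l :: nat
  assumes fin: "finite V" and cV: "card V = l + 1" and BV: "B \<subseteq> V" and l1: "1 \<le> l"
  defines "CC \<equiv> {c. (\<forall>v. v \<notin> V \<longrightarrow> c v = 0) \<and> (\<forall>v\<in>V. c v \<ge> 1) \<and> sum c B = l \<and> sum c (V - B) = l}"
  shows "card {L. good L \<and> set L = V \<and> blackL L = B} =
     fact (card (V - B) - 1) * fact (card B - 1) * l * card CC"
proof -
  define G where "G = {L. good L \<and> set L = V \<and> blackL L = B}"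
  define dd where "dd r c = (\<lambda>v. c v + (if v = r then 1 else (0::nat)))" for r and c :: "'a \<Rightarrow> nat"
  define K :: nat where "K = fact (card (V - B) - 1) * fact (card B - 1)"
  have finB: "finite B" using fin BV finite_subset by auto
  have finCC: "finite CC"
  proof (rule finite_subset[OF _ finite_set_of_finite_funs[OF fin, of "{..l}" 0]])
    show "CC \<subseteq> {f. \<forall>x. (x \<in> V \<longrightarrow> f x \<in> {..l}) \<and> (x \<notin> V \<longrightarrow> f x = 0)}"
    proof
      fix c assume c: "c \<in> CC"
      have "c x \<le> l" if "x \<in> V" for x
      proof (cases "x \<in> B")
        case True
        have "c x \<le> sum c B" by (rule member_le_sum) (use True finB in auto)
        then show ?thesis using c by (simp add: CC_def)
      next
        case False
        have "c x \<le> sum c (V - B)" by (rule member_le_sum) (use False that fin in auto)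
        then show ?thesis using c by (simp add: CC_def)
      qed
      then show "c \<in> {f. \<forall>x. (x \<in> V \<longrightarrow> f x \<in> {..l}) \<and> (x \<notin> V \<longrightarrow> f x = 0)}"
        using c by (auto simp: CC_def)
    qed
  qed simp
  have Vdd: "{v. dd r c v \<noteq> 0} = V" if "r \<in> B" "c \<in> CC" for r c
    using that BV by (auto simp: dd_def CC_def)
  have sdd: "sum (dd r c) A = sum c A + (if r \<in> A then 1 else 0)" if "finite A" for r c A
  proof -
    have "sum (dd r c) A = sum c A + sum (\<lambda>v. if v = r then 1 else 0) A"
      by (simp add: dd_def sum.distrib)
    then show ?thesis using that by (simp add: sum.delta')
  qed
  have GU: "G = (\<Union>p\<in>B \<times> CC. S (fst p) B (dd (fst p) (snd p)))"
  proof
    show "G \<subseteq> (\<Union>p\<in>B \<times> CC. S (fst p) B (dd (fst p) (snd p)))"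
    proof
      fix L assume L: "L \<in> G"
      have g: "good L" "set L = V" "blackL L = B" using L by (auto simp: G_def)
      have ne: "L \<noteq> []" "hd L = last L" "length L + 1 = 2 * card (set L)" using g by (auto simp: good_def)
      have len: "length L = Suc (2 * l)" using ne(3) g(2) cV by simp
      define r where "r = hd L"
      have rB: "r \<in> B" using ne g(3) by (auto simp: r_def blackL_iff hd_conv_nth intro!: exI[of _ 0])
      have cr: "count_list L r \<ge> 2" using good_hd_count[OF g(1)] len l1 by (simp add: r_def)
      define c where "c v = count_list L v - (if v = r then 1 else 0)" for v
      have ddc: "dd r c = count_list L" using cr by (auto simp: dd_def c_def fun_eq_iff)
      have cs: "sum (count_list L) B = Suc l" "sum (count_list L) (V - B) = l"
        using color_sums[OF g(1) len] g by simp_all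
      have "c \<in> CC"
      proof -
        have "c v = 0" if "v \<notin> V" for v using that g(2) by (auto simp: c_def)
        moreover have "c v \<ge> 1" if "v \<in> V" for v
        proof -
          have "count_list L v \<ge> 1" using that g(2) count_list_0_iff
            by (metis less_one not_le)
          then show ?thesis using cr by (auto simp: c_def)
        qed
        moreover have "sum c B = l" using sdd[OF finB, of r c] ddc cs rB by simp
        moreover have "sum c (V - B) = l" using sdd[of "V - B" r c] ddc cs rB fin by simp
        ultimately show ?thesis by (simp add: CC_def)
      qed
      moreover have "L \<in> S r B (dd r c)" using g ddc by (simp add: S_def r_def)
      ultimately show "L \<in> (\<Union>p\<in>B \<times> CC. S (fst p) B (dd (fst p) (snd p)))" using rB by force
    qed
  next
    show "(\<Union>p\<in>B \<times> CC. S (fst p) B (dd (fst p) (snd p))) \<subseteq> G"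
    proof
      fix L assume "L \<in> (\<Union>p\<in>B \<times> CC. S (fst p) B (dd (fst p) (snd p)))"
      then obtain r c where rc: "r \<in> B" "c \<in> CC" "L \<in> S r B (dd r c)" by auto
      then show "L \<in> G" using S_set[OF rc(3)] Vdd[OF rc(1,2)] by (simp add: G_def S_def)
    qed
  qed
  have disj: "\<forall>p\<in>B \<times> CC. \<forall>q\<in>B \<times> CC. p \<noteq> q \<longrightarrow>
      S (fst p) B (dd (fst p) (snd p)) \<inter> S (fst q) B (dd (fst q) (snd q)) = {}"
  proof (intro ballI impI)
    fix p q assume "p \<in> B \<times> CC" "q \<in> B \<times> CC" "p \<noteq> q"
    show "S (fst p) B (dd (fst p) (snd p)) \<inter> S (fst q) B (dd (fst q) (snd q)) = {}"
    proof (rule ccontr)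
      assume "S (fst p) B (dd (fst p) (snd p)) \<inter> S (fst q) B (dd (fst q) (snd q)) \<noteq> {}"
      then obtain L where L: "L \<in> S (fst p) B (dd (fst p) (snd p))" "L \<in> S (fst q) B (dd (fst q) (snd q))"
        by blast
      have r: "fst p = fst q" using L by (simp add: S_def)
      have c1: "count_list L = dd (fst p) (snd p)" using L(1) by (simp add: S_def)
      have c2: "count_list L = dd (fst q) (snd q)" using L(2) by (simp add: S_def)
      have "dd (fst p) (snd p) = dd (fst q) (snd q)" by (rule trans[OF c1[symmetric] c2])
      then have "snd p = snd q" using r by (auto simp: dd_def fun_eq_iff)
      then show False using r \<open>p \<noteq> q\<close> by (simp add: prod_eq_iff)
    qed
  qed
  have finS: "\<forall>p\<in>B \<times> CC. finite (S (fst p) B (dd (fst p) (snd p)))"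
    using Vdd fin by (auto intro!: finite_S)
  have "card G = (\<Sum>p\<in>B \<times> CC. card (S (fst p) B (dd (fst p) (snd p))))"
    unfolding GU by (rule card_UN_disjoint) (use finB finCC finS disj in auto)
  also have "\<dots> = (\<Sum>p\<in>B \<times> CC. K * snd p (fst p))"
  proof (rule sum.cong[OF refl])
    fix p assume p: "p \<in> B \<times> CC"
    obtain r c where pr: "p = (r, c)" by (cases p)
    have rc: "r \<in> B" "c \<in> CC" using p pr by auto
    have "card (S r B (dd r c)) = fact (card (V - B) - 1) * fact (card B - 1) * (dd r c r - 1)"
    proof (rule Mcount)
      show "finite V" "V = {v. dd r c v \<noteq> 0}" "card V = Suc l" "1 \<le> l" "r \<in> B" "B \<subseteq> V"
        using fin Vdd[OF rc] cV l1 rc BV by auto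
      show "sum (dd r c) B = Suc l" using sdd[OF finB, of r c] rc by (simp add: CC_def)
      show "sum (dd r c) (V - B) = l" using sdd[of "V - B" r c] rc fin by (simp add: CC_def)
    qed
    then show "card (S (fst p) B (dd (fst p) (snd p))) = K * snd p (fst p)"
      using pr by (simp add: K_def dd_def)
  qed
  also have "\<dots> = (\<Sum>(r, c)\<in>B \<times> CC. K * c r)" by (intro sum.cong) auto
  also have "\<dots> = (\<Sum>r\<in>B. \<Sum>c\<in>CC. K * c r)" by (simp add: sum.cartesian_product)
  also have "\<dots> = (\<Sum>c\<in>CC. \<Sum>r\<in>B. K * c r)" by (rule sum.swap)
  also have "\<dots> = (\<Sum>c\<in>CC. K * l)"
  proof (rule sum.cong[OF refl])
    fix c assume "c \<in> CC" then show "(\<Sum>r\<in>B. K * c r) = K * l"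
      by (simp add: CC_def sum_distrib_left[symmetric])
  qed
  also have "\<dots> = K * l * card CC" by simp
  finally show ?thesis by (simp add: G_def K_def)
qed

lemma card_CC:
  fixes V B :: "'a set" and l :: nat
  assumes fin: "finite V" and BV: "B \<subseteq> V" and B0: "B \<noteq> {}" and W0: "V - B \<noteq> {}"
  shows "card {c. (\<forall>v. v \<notin> V \<longrightarrow> c v = 0) \<and> (\<forall>v\<in>V. c v \<ge> (1::nat)) \<and> sum c B = Suc l \<and> sum c (V - B) = Suc l}
     = (l choose (card B - 1)) * (l choose (card (V - B) - 1))"
proof -
  define W where "W = V - B"
  define CC where "CC = {c. (\<forall>v. v \<notin> V \<longrightarrow> c v = 0) \<and> (\<forall>v\<in>V. c v \<ge> (1::nat)) \<and> sum c B = Suc l \<and> sum c W = Suc l}"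
  have finB: "finite B" "finite W" using fin BV finite_subset by (auto simp: W_def)
  define h where "h c = (\<lambda>v. if v \<in> B then c v else 0, \<lambda>v. if v \<in> W then c v else 0)" for c :: "'a \<Rightarrow> nat"
  have inj: "inj_on h CC"
  proof (rule inj_onI)
    fix c c' assume c: "c \<in> CC" "c' \<in> CC" "h c = h c'"
    show "c = c'"
    proof
      fix v
      show "c v = c' v"
      proof (cases "v \<in> V")
        case True
        then show ?thesis using c(3) unfolding h_def W_def
          by (cases "v \<in> B") (auto simp: fun_eq_iff; metis)+
      next
        case False then show ?thesis using c by (simp add: CC_def)
      qed
    qed
  qed
  have img: "h ` CC = Comp B (Suc l) \<times> Comp W (Suc l)"
  proof
    show "h ` CC \<subseteq> Comp B (Suc l) \<times> Comp W (Suc l)"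
    proof
      fix p assume "p \<in> h ` CC"
      then obtain c where c: "c \<in> CC" "p = h c" by auto
      have "sum (\<lambda>v. if v \<in> B then c v else 0) B = sum c B" by (rule sum.cong) auto
      moreover have "sum (\<lambda>v. if v \<in> W then c v else 0) W = sum c W" by (rule sum.cong) auto
      ultimately show "p \<in> Comp B (Suc l) \<times> Comp W (Suc l)"
        using c BV by (auto simp: h_def Comp_def CC_def W_def)
    qed
  next
    show "Comp B (Suc l) \<times> Comp W (Suc l) \<subseteq> h ` CC"
    proof
      fix p assume p: "p \<in> Comp B (Suc l) \<times> Comp W (Suc l)"
      obtain f g where fg: "p = (f, g)" by (cases p)
      have f: "\<forall>v. v \<notin> B \<longrightarrow> f v = 0" "\<forall>v\<in>B. f v \<ge> 1" "sum f B = Suc l" using p fg by (auto simp: Comp_def)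
      have g: "\<forall>v. v \<notin> W \<longrightarrow> g v = 0" "\<forall>v\<in>W. g v \<ge> 1" "sum g W = Suc l" using p fg by (auto simp: Comp_def)
      define c where "c v = f v + g v" for v
      have "sum c B = sum f B" using g(1) by (intro sum.cong) (auto simp: c_def W_def)
      moreover have "sum c W = sum g W" using f(1) by (intro sum.cong) (auto simp: c_def W_def)
      moreover have "\<forall>v. v \<notin> V \<longrightarrow> c v = 0" using f(1) g(1) BV by (auto simp: c_def W_def)
      moreover have "\<forall>v\<in>V. c v \<ge> 1"
      proof
        fix v assume v: "v \<in> V"
        show "c v \<ge> 1"
        proof (cases "v \<in> B")
          case True then have "f v \<ge> 1" using f(2) by blast
          then show ?thesis by (simp add: c_def)
        next
          case False then have "g v \<ge> 1" using g(2) v by (simp add: W_def)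
          then show ?thesis by (simp add: c_def)
        qed
      qed
      ultimately have "c \<in> CC" using f(3) g(3) by (simp add: CC_def)
      moreover have "h c = p" using f(1) g(1) fg by (auto simp: h_def c_def fun_eq_iff W_def)
      ultimately show "p \<in> h ` CC" by force
    qed
  qed
  have "card CC = card (Comp B (Suc l) \<times> Comp W (Suc l))" using card_image[OF inj] img by simp
  also have "\<dots> = card (Comp B (Suc l)) * card (Comp W (Suc l))" by (rule card_cartesian_product)
  also have "\<dots> = (l choose (card B - 1)) * (l choose (card W - 1))"
    using card_Comp[OF finB(1) B0] card_Comp[OF finB(2)] W0 by (simp add: W_def)
  finally show ?thesis by (simp add: CC_def W_def)
qed



theorem lemma4p6:
  fixes V B :: "'a set" and l :: nat
  assumes "finite V" and "card V = l + 1" and "B \<subseteq> V"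
  shows "card {T \<in> balanced_trees V l. black T = B} =
    (if card B = 0 \<or> card B = l + 1 then 0
     else fact l * ((l - 1) choose (card B - 1)))"
proof (cases "l = 0")
  case True
  have "balanced_trees V l = {}" using True by (simp add: balanced_trees_def circuits_def)
  moreover have "card B \<le> card V" using card_mono[OF assms(1,3)] .
  ultimately show ?thesis using True assms by auto
next
  case False
  then have l1: "1 \<le> l" by simp
  note fin = assms(1) and cV = assms(2) and BV = assms(3)
  define A where "A = {T \<in> balanced_trees V l. black T = B}"
  define G where "G = {L. good L \<and> set L = V \<and> blackL L = B}"
  define f where "f T = T @ [hd T]" for T :: "'a list"
  have inj: "inj_on f A"
    by (rule inj_onI) (metis butlast_snoc f_def)
  have img: "f ` A = G"
  proof
    show "f ` A \<subseteq> G"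
    proof
      fix L assume "L \<in> f ` A"
      then obtain T where T: "T \<in> A" "L = f T" by auto
      have t: "length T = 2 * l" "set T = V" "balanced T" "black T = B"
        using T(1) by (auto simp: A_def balanced_trees_def circuits_def)
      have ne: "T \<noteq> []" using t l1 by auto
      have sL: "set L = V" using T(2) t ne by (auto simp: f_def)
      have "good L"
        unfolding good_def using T(2) ne t balanced_iff[OF ne] sL cV by (simp add: f_def)
      moreover have "blackL L = B" using black_eq[OF ne] T(2) t by (simp add: f_def)
      ultimately show "L \<in> G" using sL by (simp add: G_def)
    qed
  next
    show "G \<subseteq> f ` A"
    proof
      fix L assume L: "L \<in> G"
      have g: "good L" "set L = V" "blackL L = B" using L by (auto simp: G_def)
      have ne: "L \<noteq> []" "hd L = last L" "length L + 1 = 2 * card (set L)" using g by (auto simp: good_def)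
      have len: "length L = Suc (2 * l)" using ne(3) g(2) cV by simp
      define T where "T = butlast L"
      have lT: "length T = 2 * l" using len by (simp add: T_def)
      then have neT: "T \<noteq> []" using l1 by auto
      have hT: "hd T = hd L" using neT append_butlast_last_id[OF ne(1)] by (metis T_def hd_append2)
      have LT: "L = f T" using ne hT by (simp add: f_def T_def append_butlast_last_id)
      have "hd T \<in> set T" using neT by simp
      then have sT: "set T = V" using LT g(2) neT by (simp add: f_def insert_absorb)
      have "balanced T" using balanced_iff[OF neT] g(1) LT by (simp add: f_def good_def)
      moreover have "black T = B" using black_eq[OF neT] LT g(3) by (simp add: f_def)
      ultimately have "T \<in> A" using lT sT l1 by (simp add: A_def balanced_trees_def circuits_def)
      then show "L \<in> f ` A" using LT by blast
    qed
  qed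
  have cA: "card A = card G" using card_image[OF inj] img by simp
  define CC where "CC = {c. (\<forall>v. v \<notin> V \<longrightarrow> c v = 0) \<and> (\<forall>v\<in>V. c v \<ge> (1::nat)) \<and> sum c B = l \<and> sum c (V - B) = l}"
  have cG: "card G = fact (card (V - B) - 1) * fact (card B - 1) * l * card CC"
    unfolding G_def CC_def using card_G[OF fin _ BV l1] cV by simp
  have finB: "finite B" using fin BV finite_subset by auto
  show ?thesis
  proof (cases "card B = 0 \<or> card B = l + 1")
    case True
    have "CC = {}"
    proof (cases "card B = 0")
      case True
      then have "B = {}" using finB by simp
      then show ?thesis using l1 by (auto simp: CC_def)
    next
      case False
      then have "card B = card V" using \<open>card B = 0 \<or> card B = l + 1\<close> cV by simp
      then have "B = V" using card_subset_eq[OF fin BV] by simp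
      then show ?thesis using l1 by (auto simp: CC_def)
    qed
    then show ?thesis using True cA cG by (simp add: A_def)
  next
    case False
    have B0: "B \<noteq> {}" using False by auto
    have cW: "card (V - B) = l + 1 - card B" using card_Diff_subset[OF finB BV] cV by simp
    have bl: "card B \<le> l + 1" using card_mono[OF fin BV] cV by simp
    then have "card (V - B) \<noteq> 0" using False cW by simp
    then have W0: "V - B \<noteq> {}" by (metis card.empty)
    have lS: "l = Suc (l - 1)" using l1 by simp
    have "card CC = ((l - 1) choose (card B - 1)) * ((l - 1) choose (card (V - B) - 1))"
      unfolding CC_def using card_CC[OF fin BV B0 W0, of "l - 1"] lS by simp
    then have "card A = fact (card (V - B) - 1) * fact (card B - 1) * l *
        (((l - 1) choose (card B - 1)) * ((l - 1) choose (card (V - B) - 1)))"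
      using cA cG by simp
    also have "\<dots> = l * (fact (card (V - B) - 1) * fact (l - 1 - (card (V - B) - 1)) * ((l - 1) choose (card (V - B) - 1)))
        * ((l - 1) choose (card B - 1))"
    proof -
      have "l - 1 - (card (V - B) - 1) = card B - 1" using cW bl False B0 W0 by simp
      then show ?thesis by (simp add: ac_simps)
    qed
    also have "fact (card (V - B) - 1) * fact (l - 1 - (card (V - B) - 1)) * ((l - 1) choose (card (V - B) - 1)) = fact (l - 1)"
      by (rule binomial_fact_lemma) (use cW False bl in linarith)
    also have "l * fact (l - 1) = (fact l :: nat)" using l1 by (cases l) simp_all
    finally show ?thesis using False by (simp add: A_def)
  qed
qed

end
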